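(* Let $G$ be an $(n,d,\lambda)$-graph, $P$ a path in $G$ and $A$ a subpath of $P$. If $|A|\ge 10\lambda n/d$, then there is a $P$-clean subset $A'\subseteq A$ with $|A'|\ge 0.9|A|$.
   Context: An $(n,d,\lambda)$-graph is an $n$-vertex $d$-regular graph whose second largest eigenvalue in absolute value is at most $\lambda$. For a path $P=(v_1,\dots,v_l)$ and $X\subseteq V(P)$, $\mathrm{int}_P(X)$ is the set of vertices $v_i\in X$ with $1<i<l$ and $v_{i-1},v_{i+1}\in X$. A subset $S\subseteq V(P)$ is $(P,\delta)$-clean if every $v\in S$ satisfies $|N(v)\cap\mathrm{int}_P(S)|\ge\delta$, where $N(v)$ is the neighbourhood in $G$; $S$ is $P$-clean if it is $(P,d|S|/(4n))$-clean. *)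

theory Defs
  imports "Jordan_Normal_Form.Char_Poly"
begin

definition simple_graph :: "nat \<Rightarrow> (nat \<Rightarrow> nat \<Rightarrow> bool) \<Rightarrow> bool" where
  "simple_graph n E \<longleftrightarrow>
     (\<forall>u v. E u v \<longrightarrow> u < n \<and> v < n) \<and> (\<forall>u v. E u v \<longrightarrow> E v u) \<and> (\<forall>u. \<not> E u u)"

definition nbhd :: "(nat \<Rightarrow> nat \<Rightarrow> bool) \<Rightarrow> nat \<Rightarrow> nat set" where
  "nbhd E v = {u. E v u}"

definition regular :: "nat \<Rightarrow> (nat \<Rightarrow> nat \<Rightarrow> bool) \<Rightarrow> nat \<Rightarrow> bool" where
  "regular n E d \<longleftrightarrow> (\<forall>v<n. card (nbhd E v) = d)"

definition adj_matrix :: "nat \<Rightarrow> (nat \<Rightarrow> nat \<Rightarrow> bool) \<Rightarrow> real mat" where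
  "adj_matrix n E = mat n n (\<lambda>(i, j). if E i j then 1 else 0)"

definition eigenvalue_list :: "real mat \<Rightarrow> real list \<Rightarrow> bool" where
  "eigenvalue_list A es \<longleftrightarrow>
     char_poly A = (\<Prod>e\<leftarrow>es. [:- e, 1:]) \<and> sorted_wrt (\<ge>) es"

text \<open>(n,d,lambda)-graph: n vertices, d-regular, and every eigenvalue other than
  the largest one (lambda_2, ..., lambda_n) has absolute value at most lambda.\<close>
definition ndl_graph :: "nat \<Rightarrow> nat \<Rightarrow> real \<Rightarrow> (nat \<Rightarrow> nat \<Rightarrow> bool) \<Rightarrow> bool" where
  "ndl_graph n d lam E \<longleftrightarrow> simple_graph n E \<and> regular n E d \<and>
     (\<exists>es. eigenvalue_list (adj_matrix n E) es \<and> (\<forall>i. 1 \<le> i \<and> i < length es \<longrightarrow> \<bar>es ! i\<bar> \<le> lam))"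

definition is_path :: "nat \<Rightarrow> (nat \<Rightarrow> nat \<Rightarrow> bool) \<Rightarrow> nat list \<Rightarrow> bool" where
  "is_path n E P \<longleftrightarrow> P \<noteq> [] \<and> distinct P \<and> set P \<subseteq> {..<n} \<and>
     (\<forall>i. i + 1 < length P \<longrightarrow> E (P ! i) (P ! (i + 1)))"

definition subpath :: "nat list \<Rightarrow> nat list \<Rightarrow> bool" where
  "subpath A P \<longleftrightarrow> A \<noteq> [] \<and> (\<exists>xs ys. P = xs @ A @ ys)"

text \<open>int_P(X), with 0-based indices: vertices P!i of X with 0 < i < length P - 1
  whose both path-neighbours P!(i-1), P!(i+1) are in X.\<close>
definition int_path :: "nat list \<Rightarrow> nat set \<Rightarrow> nat set" where
  "int_path P X = {P ! i | i. 0 < i \<and> i + 1 < length P \<and> P ! i \<in> X \<and>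
                               P ! (i - 1) \<in> X \<and> P ! (i + 1) \<in> X}"

definition clean_delta :: "(nat \<Rightarrow> nat \<Rightarrow> bool) \<Rightarrow> nat list \<Rightarrow> real \<Rightarrow> nat set \<Rightarrow> bool" where
  "clean_delta E P \<delta> S \<longleftrightarrow> S \<subseteq> set P \<and>
     (\<forall>v\<in>S. real (card (nbhd E v \<inter> int_path P S)) \<ge> \<delta>)"

definition clean :: "nat \<Rightarrow> nat \<Rightarrow> (nat \<Rightarrow> nat \<Rightarrow> bool) \<Rightarrow> nat list \<Rightarrow> nat set \<Rightarrow> bool" where
  "clean n d E P S \<longleftrightarrow> clean_delta E P (real d * real (card S) / (4 * real n)) S"

end

theory Submission
  imports Defs "Jordan_Normal_Form.Schur_Decomposition"
begin
lemma cs_sum: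
  fixes f g :: "nat \<Rightarrow> real"
  assumes "finite S"
  shows "(\<Sum>i\<in>S. f i * g i)^2 \<le> (\<Sum>i\<in>S. (f i)^2) * (\<Sum>i\<in>S. (g i)^2)"
proof -
  have "0 \<le> (\<Sum>i\<in>S. \<Sum>j\<in>S. (f i * g j - f j * g i)^2)" by (intro sum_nonneg) auto
  also have "\<dots> = (\<Sum>i\<in>S. \<Sum>j\<in>S. (f i)^2 * (g j)^2 + (f j)^2 * (g i)^2 - 2 * ((f i * g i) * (f j * g j)))"
    by (intro sum.cong refl) (simp add: power2_eq_square algebra_simps)
  also have "\<dots> = (\<Sum>i\<in>S. \<Sum>j\<in>S. (f i)^2 * (g j)^2) + (\<Sum>i\<in>S. \<Sum>j\<in>S. (f j)^2 * (g i)^2)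
      - 2 * (\<Sum>i\<in>S. \<Sum>j\<in>S. (f i * g i) * (f j * g j))"
    by (simp add: sum_subtractf sum.distrib sum_distrib_left)
  also have "\<dots> = 2 * ((\<Sum>i\<in>S. (f i)^2) * (\<Sum>i\<in>S. (g i)^2)) - 2 * (\<Sum>i\<in>S. f i * g i)^2"
    by (simp add: sum_product[symmetric] power2_eq_square mult.commute sum.swap[of "\<lambda>i j. f j * f j * (g i * g i)"])
  finally show ?thesis by simp
qed

definition mtrace :: "real mat \<Rightarrow> real" where
  "mtrace M = (\<Sum>i<dim_row M. M $$ (i,i))"

lemma mtrace_comm:
  assumes X: "X \<in> carrier_mat n n" and Y: "Y \<in> carrier_mat n n"
  shows "mtrace (X * Y) = mtrace (Y * X)"
proof -
  have "mtrace (X * Y) = (\<Sum>i<n. \<Sum>j<n. X $$ (i,j) * Y $$ (j,i))"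
    using X Y by (simp add: mtrace_def scalar_prod_def atLeast0LessThan)
  also have "\<dots> = (\<Sum>j<n. \<Sum>i<n. Y $$ (j,i) * X $$ (i,j))"
    by (subst sum.swap) (simp add: mult.commute)
  also have "\<dots> = mtrace (Y * X)"
    using X Y by (simp add: mtrace_def scalar_prod_def atLeast0LessThan)
  finally show ?thesis .
qed

lemma ut_mult:
  fixes X Y :: "real mat"
  assumes X: "X \<in> carrier_mat n n" and Y: "Y \<in> carrier_mat n n"
    and uX: "upper_triangular X" and uY: "upper_triangular Y"
  shows "upper_triangular (X * Y)" "\<And>i. i < n \<Longrightarrow> (X * Y) $$ (i,i) = X $$ (i,i) * Y $$ (i,i)"
proof -
  show "upper_triangular (X * Y)"
  proof (rule upper_triangularI)
    fix i j assume ji: "j < i" and i: "i < dim_row (X * Y)"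
    have "\<And>l. l < n \<Longrightarrow> X $$ (i,l) * Y $$ (l,j) = 0"
    proof -
      fix l assume l: "l < n"
      show "X $$ (i,l) * Y $$ (l,j) = 0"
      proof (cases "l < i")
        case True then show ?thesis using uX X i by (auto dest: upper_triangularD)
      next
        case False
        then have "Y $$ (l,j) = 0" using upper_triangularD[OF uY, of j l] ji l Y by auto
        then show ?thesis by simp
      qed
    qed
    then show "(X * Y) $$ (i,j) = 0" using X Y i ji
      by (simp add: scalar_prod_def del: mult_eq_0_iff)
  qed
next
  fix i assume i: "i < n"
  have "\<And>l. l < n \<Longrightarrow> X $$ (i,l) * Y $$ (l,i) = (if l = i then X $$ (i,i) * Y $$ (i,i) else 0)"
  proof -
    fix l assume l: "l < n"
    show "X $$ (i,l) * Y $$ (l,i) = (if l = i then X $$ (i,i) * Y $$ (i,i) else 0)"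
    proof (cases "l < i")
      case True then show ?thesis using uX X i by (auto dest: upper_triangularD)
    next
      case False
      show ?thesis
      proof (cases "l = i")
        case False
        then have "Y $$ (l,i) = 0" using upper_triangularD[OF uY, of i l] \<open>\<not> l < i\<close> l Y by auto
        then show ?thesis using False by simp
      qed simp
    qed
  qed
  then have "(\<Sum>l = 0..<n. X $$ (i,l) * Y $$ (l,i)) = (\<Sum>l = 0..<n. (if l = i then X $$ (i,i) * Y $$ (i,i) else 0))"
    by (intro sum.cong) auto
  then show "(X * Y) $$ (i,i) = X $$ (i,i) * Y $$ (i,i)" using X Y i
    by (simp add: scalar_prod_def)
qed

lemma ut_pow:
  fixes B :: "real mat"
  assumes B: "B \<in> carrier_mat n n" and uB: "upper_triangular B"
  shows "upper_triangular (B ^\<^sub>m k) \<and> (\<forall>i<n. (B ^\<^sub>m k) $$ (i,i) = (B $$ (i,i))^k)"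
proof (induction k)
  case 0
  then show ?case using B by auto
next
  case (Suc k)
  have Bk: "B ^\<^sub>m k \<in> carrier_mat n n" using B by simp
  show ?case using ut_mult[OF Bk B] Suc uB by simp
qed

lemma mtrace_pow_es:
  fixes A :: "real mat"
  assumes A: "A \<in> carrier_mat n n"
    and c: "char_poly A = (\<Prod>e\<leftarrow>es. [:- e, 1:])"
  shows "length es = n \<and> mtrace (A ^\<^sub>m k) = (\<Sum>i<n. (es ! i)^k)"
proof -
  obtain B P Q where BPQ: "schur_decomposition A es = (B,P,Q)" by (cases "schur_decomposition A es") auto
  from schur_decomposition[OF A c BPQ]
  have sim: "similar_mat_wit A B P Q" and uB: "upper_triangular B" and dB: "diag_mat B = es" by auto
  note W = similar_mat_witD2[OF A sim]
  have len: "length es = n" using dB W(5) by (auto simp: diag_mat_def)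
  have esi: "\<And>i. i < n \<Longrightarrow> es ! i = B $$ (i,i)" using dB W(5) by (auto simp: diag_mat_def)
  have Bk: "B ^\<^sub>m k \<in> carrier_mat n n" using W(5) by simp
  have "A ^\<^sub>m k = P * B ^\<^sub>m k * Q" by (rule similar_mat_wit_pow_id[OF sim])
  then have "mtrace (A ^\<^sub>m k) = mtrace (Q * (P * B ^\<^sub>m k))"
    using mtrace_comm[of "P * B ^\<^sub>m k" n Q] W Bk by simp
  also have "Q * (P * B ^\<^sub>m k) = (Q * P) * B ^\<^sub>m k"
    using assoc_mult_mat[of Q n n P n "B ^\<^sub>m k" n] W Bk by simp
  also have "\<dots> = B ^\<^sub>m k" using W Bk by simp
  also have "mtrace (B ^\<^sub>m k) = (\<Sum>i<n. (es ! i)^k)"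
    using ut_pow[OF W(5) uB, of k] Bk esi W(5) by (simp add: mtrace_def)
  finally show ?thesis using len by simp
qed

definition Am :: "(nat \<Rightarrow> nat \<Rightarrow> bool) \<Rightarrow> nat \<Rightarrow> nat \<Rightarrow> real" where
  "Am E i j = (if E i j then 1 else 0)"

definition gop :: "nat \<Rightarrow> (nat \<Rightarrow> nat \<Rightarrow> bool) \<Rightarrow> (nat \<Rightarrow> real) \<Rightarrow> nat \<Rightarrow> real" where
  "gop n E x = (\<lambda>i. \<Sum>j<n. Am E i j * x j)"

definition ip :: "nat \<Rightarrow> (nat \<Rightarrow> real) \<Rightarrow> (nat \<Rightarrow> real) \<Rightarrow> real" where
  "ip n x y = (\<Sum>i<n. x i * y i)"

lemma Am_sym: "simple_graph n E \<Longrightarrow> Am E i j = Am E j i"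
  unfolding simple_graph_def Am_def by metis

lemma gop_sym:
  assumes "simple_graph n E"
  shows "ip n (gop n E x) y = ip n x (gop n E y)"
proof -
  have "ip n (gop n E x) y = (\<Sum>i<n. \<Sum>j<n. Am E i j * x j * y i)"
    by (simp add: ip_def gop_def sum_distrib_right)
  also have "\<dots> = (\<Sum>j<n. \<Sum>i<n. x j * (Am E j i * y i))"
    by (subst sum.swap) (simp add: Am_sym[OF assms, of _ ] mult.commute mult.left_commute)
  also have "\<dots> = ip n x (gop n E y)"
    by (simp add: ip_def gop_def sum_distrib_left)
  finally show ?thesis .
qed

lemma gop_pow_sym:
  assumes "simple_graph n E"
  shows "ip n ((gop n E ^^ k) x) y = ip n x ((gop n E ^^ k) y)"
proof (induction k arbitrary: x y)
  case 0 then show ?case by simp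
next
  case (Suc k)
  have "ip n ((gop n E ^^ Suc k) x) y = ip n (gop n E ((gop n E ^^ k) x)) y" by simp
  also have "\<dots> = ip n ((gop n E ^^ k) x) (gop n E y)" by (rule gop_sym[OF assms])
  also have "\<dots> = ip n x ((gop n E ^^ k) (gop n E y))" by (rule Suc)
  also have "(gop n E ^^ k) (gop n E y) = (gop n E ^^ Suc k) y" by (simp add: funpow_swap1)
  finally show ?case .
qed

lemma adj_carrier: "adj_matrix n E \<in> carrier_mat n n"
  by (simp add: adj_matrix_def)

lemma gop_pow_mat:
  assumes "simple_graph n E" and "i < n"
  shows "(gop n E ^^ k) x i = (\<Sum>j<n. (adj_matrix n E ^\<^sub>m k) $$ (i,j) * x j)"
  using assms(2)
proof (induction k arbitrary: x i)
  case 0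
  have "(\<Sum>j<n. (adj_matrix n E ^\<^sub>m 0) $$ (i,j) * x j) = (\<Sum>j<n. (if j = i then x i else 0))"
    using 0 by (intro sum.cong) (auto simp: adj_matrix_def)
  then show ?case using 0 by simp
next
  case (Suc k)
  let ?W = "adj_matrix n E ^\<^sub>m k"
  have W: "?W \<in> carrier_mat n n" using adj_carrier by simp
  have "(gop n E ^^ Suc k) x i = (gop n E ^^ k) (gop n E x) i" by (simp add: funpow_swap1)
  also have "\<dots> = (\<Sum>j<n. ?W $$ (i,j) * gop n E x j)"
    by (rule Suc.IH[OF Suc.prems])
  also have "\<dots> = (\<Sum>j<n. ?W $$ (i,j) * (\<Sum>l<n. Am E j l * x l))"
    by (simp add: gop_def)
  also have "\<dots> = (\<Sum>l<n. (\<Sum>j<n. ?W $$ (i,j) * Am E j l) * x l)"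
    by (simp add: sum_distrib_left sum_distrib_right mult.assoc) (rule sum.swap)
  also have "\<dots> = (\<Sum>l<n. (?W * adj_matrix n E) $$ (i,l) * x l)"
    using W Suc.prems
    by (intro sum.cong refl) (simp add: scalar_prod_def adj_matrix_def Am_def atLeast0LessThan)
  finally show ?case by simp
qed

definition dl :: "nat \<Rightarrow> nat \<Rightarrow> real" where "dl j = (\<lambda>l. if l = j then 1 else 0)"

lemma ip_dl: "i < n \<Longrightarrow> ip n f (dl i) = f i"
proof -
  assume i: "i < n"
  have "ip n f (dl i) = (\<Sum>l<n. if l = i then f i else 0)"
    unfolding ip_def dl_def by (intro sum.cong) auto
  then show ?thesis using i by simp
qed

lemma ip_comm: "ip n f g = ip n g f"
  by (simp add: ip_def mult.commute)

lemma ip_dl': "i < n \<Longrightarrow> ip n (dl i) f = f i"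
  using ip_dl ip_comm by metis

lemma pow_entry:
  assumes "simple_graph n E" "i < n" "j < n"
  shows "(adj_matrix n E ^\<^sub>m k) $$ (i,j) = (gop n E ^^ k) (dl j) i"
proof -
  have "(gop n E ^^ k) (dl j) i = (\<Sum>l<n. (adj_matrix n E ^\<^sub>m k) $$ (i,l) * dl j l)"
    by (rule gop_pow_mat[OF assms(1,2)])
  also have "\<dots> = (\<Sum>l<n. (if l = j then (adj_matrix n E ^\<^sub>m k) $$ (i,j) else 0))"
    by (intro sum.cong) (auto simp: dl_def)
  finally show ?thesis using assms by simp
qed

lemma pow_entry_sym:
  assumes "simple_graph n E" "i < n" "j < n"
  shows "(adj_matrix n E ^\<^sub>m k) $$ (i,j) = (adj_matrix n E ^\<^sub>m k) $$ (j,i)"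
proof -
  have "(adj_matrix n E ^\<^sub>m k) $$ (i,j) = ip n ((gop n E ^^ k) (dl j)) (dl i)"
    using pow_entry[OF assms] ip_dl[OF assms(2)] by simp
  also have "\<dots> = ip n (dl j) ((gop n E ^^ k) (dl i))" by (rule gop_pow_sym[OF assms(1)])
  also have "\<dots> = (adj_matrix n E ^\<^sub>m k) $$ (j,i)"
    using pow_entry[OF assms(1,3,2)] ip_dl'[OF assms(3)] by simp
  finally show ?thesis .
qed

lemma pow_diag_double:
  assumes "simple_graph n E" "i < n"
  shows "(adj_matrix n E ^\<^sub>m (k + k)) $$ (i,i) = (\<Sum>j<n. ((adj_matrix n E ^\<^sub>m k) $$ (i,j))^2)"
proof -
  have "(adj_matrix n E ^\<^sub>m (k + k)) $$ (i,i) = (gop n E ^^ k) ((gop n E ^^ k) (dl i)) i"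
    using pow_entry[OF assms assms(2), of "k+k"] by (simp add: funpow_add)
  also have "\<dots> = (\<Sum>j<n. (adj_matrix n E ^\<^sub>m k) $$ (i,j) * (gop n E ^^ k) (dl i) j)"
    by (rule gop_pow_mat[OF assms])
  also have "\<dots> = (\<Sum>j<n. ((adj_matrix n E ^\<^sub>m k) $$ (i,j))^2)"
    using pow_entry[OF assms(1) _ assms(2)] pow_entry_sym[OF assms(1,2)]
    by (intro sum.cong refl) (simp add: power2_eq_square)
  finally show ?thesis .
qed

lemma nbhd_sub: "simple_graph n E \<Longrightarrow> nbhd E i \<subseteq> {..<n}"
  unfolding simple_graph_def nbhd_def by auto

lemma sum_Am:
  assumes "simple_graph n E" "finite T"
  shows "(\<Sum>j\<in>T. Am E i j) = real (card (nbhd E i \<inter> T))"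
proof -
  have "(\<Sum>j\<in>T. Am E i j) = (\<Sum>j\<in>T. if j \<in> nbhd E i then 1 else 0)"
    by (intro sum.cong) (auto simp: Am_def nbhd_def)
  also have "\<dots> = real (card (T \<inter> nbhd E i))"
    using assms(2) by (simp add: sum.If_cases)
  finally show ?thesis by (simp add: Int_commute)
qed

lemma gop_one:
  assumes "simple_graph n E" "regular n E d" "i < n"
  shows "(\<Sum>j<n. Am E i j) = real d"
  using sum_Am[OF assms(1), of "{..<n}" i] nbhd_sub[OF assms(1), of i] assms(2,3)
  by (simp add: regular_def Int_absorb2)

lemma gop_pow_one:
  assumes "simple_graph n E" "regular n E d" "i < n"
  shows "(gop n E ^^ k) (\<lambda>_. 1) i = real d ^ k"
  using assms(3)
proof (induction k arbitrary: i)
  case 0 then show ?case by simp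
next
  case (Suc k)
  have "(gop n E ^^ Suc k) (\<lambda>_. 1) i = (\<Sum>j<n. Am E i j * (gop n E ^^ k) (\<lambda>_. 1) j)"
    by (simp add: gop_def)
  also have "\<dots> = (\<Sum>j<n. Am E i j * real d ^ k)"
    using Suc.IH by (intro sum.cong) auto
  also have "\<dots> = real d ^ Suc k"
    using gop_one[OF assms(1,2) Suc.prems] by (simp add: sum_distrib_right[symmetric])
  finally show ?case .
qed

lemma pow_row_sum:
  assumes "simple_graph n E" "regular n E d" "i < n"
  shows "(\<Sum>j<n. (adj_matrix n E ^\<^sub>m k) $$ (i,j)) = real d ^ k"
  using gop_pow_mat[OF assms(1,3), of k "\<lambda>_. 1"] gop_pow_one[OF assms, of k] by simp

lemma ip_cs: "(ip n u v)^2 \<le> ip n u u * ip n v v"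
  using cs_sum[of "{..<n}" u v] by (simp add: ip_def power2_eq_square)

lemma ip_nonneg: "0 \<le> ip n u u"
  by (simp add: ip_def sum_nonneg)

lemma frob:
  assumes sg: "simple_graph n E" and reg: "regular n E d" and n: "0 < n"
    and sx: "(\<Sum>j<n. x j) = 0"
  shows "ip n ((gop n E ^^ k) x) ((gop n E ^^ k) x)
    \<le> (mtrace (adj_matrix n E ^\<^sub>m (k+k)) - real d ^ (k+k)) * ip n x x"
proof -
  let ?W = "adj_matrix n E ^\<^sub>m k"
  define c where "c = real d ^ k / real n"
  have cn: "c * real n = real d ^ k" using n by (simp add: c_def)
  have z: "(gop n E ^^ k) x i = (\<Sum>j<n. (?W $$ (i,j) - c) * x j)" if i: "i < n" for i
  proof -
    have "(gop n E ^^ k) x i = (\<Sum>j<n. ?W $$ (i,j) * x j)" by (rule gop_pow_mat[OF sg i])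
    also have "\<dots> = (\<Sum>j<n. ?W $$ (i,j) * x j) - c * (\<Sum>j<n. x j)" using sx by simp
    also have "\<dots> = (\<Sum>j<n. (?W $$ (i,j) - c) * x j)"
      by (simp add: sum_distrib_left sum_subtractf left_diff_distrib)
    finally show ?thesis .
  qed
  have "ip n ((gop n E ^^ k) x) ((gop n E ^^ k) x) = (\<Sum>i<n. ((gop n E ^^ k) x i)^2)"
    by (simp add: ip_def power2_eq_square)
  also have "\<dots> \<le> (\<Sum>i<n. (\<Sum>j<n. (?W $$ (i,j) - c)^2) * ip n x x)"
  proof (rule sum_mono)
    fix i assume "i \<in> {..<n}"
    then have i: "i < n" by simp
    show "((gop n E ^^ k) x i)^2 \<le> (\<Sum>j<n. (?W $$ (i,j) - c)^2) * ip n x x"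
      using z[OF i] cs_sum[of "{..<n}" "\<lambda>j. ?W $$ (i,j) - c" x] by (simp add: ip_def power2_eq_square)
  qed
  also have "\<dots> = (\<Sum>i<n. \<Sum>j<n. (?W $$ (i,j) - c)^2) * ip n x x"
    by (simp add: sum_distrib_right)
  also have "(\<Sum>i<n. \<Sum>j<n. (?W $$ (i,j) - c)^2)
      = (\<Sum>i<n. \<Sum>j<n. (?W $$ (i,j))^2) - 2 * c * (\<Sum>i<n. \<Sum>j<n. ?W $$ (i,j)) + real n * real n * c^2"
    by (simp add: power2_diff sum_subtractf sum.distrib sum_distrib_left mult_ac)
  also have "(\<Sum>i<n. \<Sum>j<n. (?W $$ (i,j))^2) = mtrace (adj_matrix n E ^\<^sub>m (k+k))"
    using pow_diag_double[OF sg] adj_carrier[of n E] by (simp add: mtrace_def)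
  also have "(\<Sum>i<n. \<Sum>j<n. ?W $$ (i,j)) = real n * real d ^ k"
    using pow_row_sum[OF sg reg] by simp
  also have "mtrace (adj_matrix n E ^\<^sub>m (k+k)) - 2 * c * (real n * real d ^ k) + real n * real n * c^2
      = mtrace (adj_matrix n E ^\<^sub>m (k+k)) - real d ^ (k+k)"
  proof -
    have "2 * c * (real n * real d ^ k) = 2 * (real d ^ k)^2" using cn by (simp add: power2_eq_square algebra_simps)
    moreover have "real n * real n * c^2 = (real d ^ k)^2" using cn by (simp add: power2_eq_square algebra_simps)
    moreover have "(real d ^ k)^2 = real d ^ (k+k)" by (simp add: power2_eq_square power_add)
    ultimately show ?thesis by simp
  qed
  finally show ?thesis .
qed

lemma es0_d:
  assumes sg: "simple_graph n E" and reg: "regular n E d" and n: "0 < n"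
    and es: "eigenvalue_list (adj_matrix n E) es"
    and lam: "\<forall>i. 1 \<le> i \<and> i < length es \<longrightarrow> \<bar>es ! i\<bar> \<le> lam"
    and dl: "lam < real d"
  shows "es ! 0 = real d" "length es = n"
proof -
  have cp: "char_poly (adj_matrix n E) = (\<Prod>e\<leftarrow>es. [:- e, 1:])" using es by (simp add: eigenvalue_list_def)
  show len: "length es = n" using mtrace_pow_es[OF adj_carrier cp] by simp
  let ?v = "vec n (\<lambda>_. 1::real)"
  have "adj_matrix n E *\<^sub>v ?v = real d \<cdot>\<^sub>v ?v"
  proof (rule eq_vecI)
    fix i assume "i < dim_vec (real d \<cdot>\<^sub>v ?v)"
    then have i: "i < n" by simp
    have "(adj_matrix n E *\<^sub>v ?v) $ i = (\<Sum>j<n. Am E i j)"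
      using i by (simp add: adj_matrix_def scalar_prod_def Am_def atLeast0LessThan)
    then show "(adj_matrix n E *\<^sub>v ?v) $ i = (real d \<cdot>\<^sub>v ?v) $ i"
      using gop_one[OF sg reg i] i by simp
  qed (simp add: adj_matrix_def)
  moreover have "?v \<noteq> 0\<^sub>v n"
  proof
    assume "?v = 0\<^sub>v n"
    then have "?v $ 0 = (0\<^sub>v n :: real vec) $ 0" by simp
    then show False using n by simp
  qed
  ultimately have "eigenvalue (adj_matrix n E) (real d)"
    unfolding eigenvalue_def eigenvector_def
    by (intro exI[of _ ?v]) (simp add: adj_matrix_def)
  then have "poly (char_poly (adj_matrix n E)) (real d) = 0"
    using eigenvalue_root_char_poly[OF adj_carrier] by blast
  then have "(\<Prod>e\<leftarrow>es. poly [:- e, 1:] (real d)) = 0"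
    unfolding cp poly_prod_list by (simp add: o_def)
  then obtain e where e: "e \<in> set es" "poly [:- e, 1:] (real d) = 0"
    by (auto simp: prod_list_zero_iff)
  then have ed: "e = real d" by simp
  from e(1) obtain j where j: "j < length es" "es ! j = e" by (auto simp: in_set_conv_nth)
  show "es ! 0 = real d"
  proof (cases "j = 0")
    case True then show ?thesis using j ed by simp
  next
    case False
    then have "\<bar>es ! j\<bar> \<le> lam" using lam j by auto
    then show ?thesis using j ed dl by simp
  qed
qed

lemma spec_bound:
  assumes sg: "simple_graph n E" and reg: "regular n E d" and n: "0 < n"
    and es: "eigenvalue_list (adj_matrix n E) es"
    and lam: "\<forall>i. 1 \<le> i \<and> i < length es \<longrightarrow> \<bar>es ! i\<bar> \<le> lam"
    and dl: "lam < real d"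
  shows "mtrace (adj_matrix n E ^\<^sub>m (k+k)) - real d ^ (k+k) \<le> real (n - 1) * (lam^2)^k"
proof -
  have cp: "char_poly (adj_matrix n E) = (\<Prod>e\<leftarrow>es. [:- e, 1:])" using es by (simp add: eigenvalue_list_def)
  note e0 = es0_d[OF sg reg n es lam dl]
  obtain m where m: "n = Suc m" using n by (cases n) auto
  have "mtrace (adj_matrix n E ^\<^sub>m (k+k)) = (\<Sum>i<n. (es ! i)^(k+k))"
    using mtrace_pow_es[OF adj_carrier cp] by simp
  also have "\<dots> = real d ^ (k+k) + (\<Sum>i<m. (es ! Suc i)^(k+k))"
    unfolding m sum.lessThan_Suc_shift using e0 by simp
  also have "(\<Sum>i<m. (es ! Suc i)^(k+k)) \<le> (\<Sum>i<m. (lam^2)^k)"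
  proof (rule sum_mono)
    fix i assume "i \<in> {..<m}"
    then have "\<bar>es ! Suc i\<bar> \<le> lam" using lam e0(2) m by auto
    then have "(es ! Suc i)^2 \<le> lam^2"
      by (metis abs_ge_zero order_trans power2_abs power_mono)
    then have "((es ! Suc i)^2)^k \<le> (lam^2)^k" by (rule power_mono) auto
    moreover have "(es ! Suc i)^(k+k) = ((es ! Suc i)^2)^k"
      by (simp only: power_mult[symmetric] mult_2)
    ultimately show "(es ! Suc i)^(k+k) \<le> (lam^2)^k" by simp
  qed
  finally show ?thesis using m by simp
qed

lemma ratio_lemma:
  fixes N :: "nat \<Rightarrow> real"
  assumes nn: "\<And>j. 0 \<le> N j" and conv: "\<And>j. (N (Suc j))^2 \<le> N j * N (Suc (Suc j))"
  shows "N j * N 1 \<le> N (Suc j) * N 0"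
proof (induction j)
  case 0 then show ?case by (simp add: mult.commute)
next
  case (Suc j)
  show ?case
  proof (cases "N j = 0")
    case True
    then have "(N (Suc j))^2 \<le> 0" using conv[of j] by simp
    then have "N (Suc j) = 0" by simp
    then show ?thesis using nn by simp
  next
    case False
    then have pos: "0 < N j" using nn[of j] by simp
    have "N j * (N (Suc j) * N 1) = N (Suc j) * (N j * N 1)" by (simp add: mult_ac)
    also have "\<dots> \<le> N (Suc j) * (N (Suc j) * N 0)" using Suc nn by (intro mult_left_mono) auto
    also have "\<dots> = (N (Suc j))^2 * N 0" by (simp add: power2_eq_square mult_ac)
    also have "\<dots> \<le> (N j * N (Suc (Suc j))) * N 0" using conv[of j] nn by (intro mult_right_mono) auto
    also have "\<dots> = N j * (N (Suc (Suc j)) * N 0)" by (simp add: mult_ac)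
    finally show ?thesis using pos by simp
  qed
qed

lemma pow_lemma:
  fixes N :: "nat \<Rightarrow> real"
  assumes nn: "\<And>j. 0 \<le> N j" and conv: "\<And>j. (N (Suc j))^2 \<le> N j * N (Suc (Suc j))"
  shows "N 1 ^ j * N 0 \<le> N j * N 0 ^ j"
proof (induction j)
  case 0 then show ?case by simp
next
  case (Suc j)
  have "N 1 ^ Suc j * N 0 = N 1 * (N 1 ^ j * N 0)" by simp
  also have "\<dots> \<le> N 1 * (N j * N 0 ^ j)" using Suc nn by (intro mult_left_mono) auto
  also have "\<dots> = (N j * N 1) * N 0 ^ j" by (simp add: mult_ac)
  also have "\<dots> \<le> (N (Suc j) * N 0) * N 0 ^ j"
    using ratio_lemma[of N, OF nn conv, of j] nn by (intro mult_right_mono) auto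
  also have "\<dots> = N (Suc j) * N 0 ^ Suc j" by (simp add: mult_ac)
  finally show ?case .
qed

lemma limit_lemma:
  fixes N :: "nat \<Rightarrow> real" and q C :: real
  assumes nn: "\<And>j. 0 \<le> N j" and conv: "\<And>j. (N (Suc j))^2 \<le> N j * N (Suc (Suc j))"
    and q: "0 \<le> q" and bd: "\<And>j. N j \<le> C * q ^ j * N 0"
  shows "N 1 \<le> q * N 0"
proof (rule ccontr)
  assume "\<not> N 1 \<le> q * N 0"
  then have gt: "q * N 0 < N 1" by simp
  show False
  proof (cases "N 0 = 0")
    case True
    then show False using bd[of 1] gt by simp
  next
    case False
    then have N0: "0 < N 0" using nn[of 0] by simp
    have key: "N 1 ^ j \<le> C * (q * N 0) ^ j" for j
    proof -
      have "N 1 ^ j * N 0 \<le> N j * N 0 ^ j" by (rule pow_lemma[of N, OF nn conv])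
      also have "\<dots> \<le> (C * q ^ j * N 0) * N 0 ^ j" using bd[of j] N0 by (intro mult_right_mono) auto
      also have "\<dots> = (C * (q * N 0) ^ j) * N 0" by (simp add: power_mult_distrib mult_ac)
      finally show ?thesis using N0 by simp
    qed
    show False
    proof (cases "q * N 0 = 0")
      case True
      then show False using key[of 1] gt by (metis mult_zero_right not_less power_one_right)
    next
      case False
      then have qp: "0 < q * N 0" using q N0 by simp
      have "1 < N 1 / (q * N 0)" using gt qp by simp
      then obtain j where j: "C < (N 1 / (q * N 0)) ^ j" using real_arch_pow by blast
      have "(N 1 / (q * N 0)) ^ j = N 1 ^ j / (q * N 0) ^ j" by (simp add: power_divide)
      also have "\<dots> \<le> C" using key[of j] qp by (simp add: divide_le_eq)
      finally show False using j by simp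
    qed
  qed
qed

lemma op_bound:
  assumes sg: "simple_graph n E" and reg: "regular n E d" and n: "0 < n"
    and es: "eigenvalue_list (adj_matrix n E) es"
    and lam: "\<forall>i. 1 \<le> i \<and> i < length es \<longrightarrow> \<bar>es ! i\<bar> \<le> lam"
    and dl: "lam < real d"
    and sx: "(\<Sum>j<n. x j) = 0"
  shows "ip n (gop n E x) (gop n E x) \<le> lam^2 * ip n x x"
proof -
  define N where "N j = ip n ((gop n E ^^ j) x) ((gop n E ^^ j) x)" for j
  have nn: "\<And>j. 0 \<le> N j" by (simp add: N_def ip_nonneg)
  have conv: "(N (Suc j))^2 \<le> N j * N (Suc (Suc j))" for j
  proof -
    let ?z = "(gop n E ^^ j) x"
    have "N (Suc j) = ip n (gop n E ?z) (gop n E ?z)" by (simp add: N_def)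
    also have "\<dots> = ip n ?z (gop n E (gop n E ?z))" by (rule gop_sym[OF sg])
    also have "gop n E (gop n E ?z) = (gop n E ^^ Suc (Suc j)) x" by simp
    finally have "N (Suc j) = ip n ?z ((gop n E ^^ Suc (Suc j)) x)" .
    then show ?thesis using ip_cs[of n ?z "(gop n E ^^ Suc (Suc j)) x"] by (simp add: N_def)
  qed
  have bd: "N j \<le> real (n - 1) * (lam^2) ^ j * N 0" for j
  proof -
    have "N j \<le> (mtrace (adj_matrix n E ^\<^sub>m (j+j)) - real d ^ (j+j)) * ip n x x"
      unfolding N_def by (rule frob[OF sg reg n sx])
    also have "\<dots> \<le> real (n - 1) * (lam^2)^j * ip n x x"
      using spec_bound[OF sg reg n es lam dl, of j] ip_nonneg[of n x] by (intro mult_right_mono) auto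
    finally show ?thesis by (simp add: N_def)
  qed
  have "N 1 \<le> lam^2 * N 0" by (rule limit_lemma[OF nn conv _ bd]) simp
  then show ?thesis by (simp add: N_def)
qed

definition ind :: "nat set \<Rightarrow> nat \<Rightarrow> real" where "ind S i = (if i \<in> S then 1 else 0)"

lemma sum_ind:
  assumes "S \<subseteq> {..<n}"
  shows "(\<Sum>i<n. ind S i) = real (card S)"
proof -
  have "(\<Sum>i<n. ind S i) = real (card ({..<n} \<inter> S))"
    by (simp add: ind_def sum.If_cases)
  then show ?thesis using assms by (simp add: Int_absorb1)
qed

lemma sum_ind_mult:
  assumes "S \<subseteq> {..<n}"
  shows "(\<Sum>i<n. ind S i * f i) = (\<Sum>i\<in>S. f i)"
proof -
  have "(\<Sum>i<n. ind S i * f i) = (\<Sum>i<n. if i \<in> S then f i else 0)"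
    by (intro sum.cong) (auto simp: ind_def)
  also have "\<dots> = sum f {i \<in> {..<n}. i \<in> S}" using sum.inter_filter[of "{..<n}" f "\<lambda>i. i \<in> S"] by simp
  also have "{i \<in> {..<n}. i \<in> S} = S" using assms by auto
  finally show ?thesis .
qed

lemma mixing:
  assumes sg: "simple_graph n E" and reg: "regular n E d" and n: "0 < n"
    and es: "eigenvalue_list (adj_matrix n E) es"
    and lam: "\<forall>i. 1 \<le> i \<and> i < length es \<longrightarrow> \<bar>es ! i\<bar> \<le> lam"
    and dl: "lam < real d"
    and R: "R \<subseteq> {..<n}" and T: "T \<subseteq> {..<n}"
  shows "((\<Sum>i\<in>R. real (card (nbhd E i \<inter> T))) - real d * real (card R) * real (card T) / real n)^2
     \<le> lam^2 * (real (card R) - real (card R)^2 / real n) * (real (card T) - real (card T)^2 / real n)"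
proof -
  define r where "r = real (card R)"
  define t where "t = real (card T)"
  define x where "x i = ind R i - r / real n" for i
  define y where "y i = ind T i - t / real n" for i
  have finT: "finite T" using T finite_subset by blast
  have sumx: "(\<Sum>i<n. x i) = 0" using sum_ind[OF R] n by (simp add: x_def sum_subtractf r_def)
  have sumy: "(\<Sum>i<n. y i) = 0" using sum_ind[OF T] n by (simp add: y_def sum_subtractf t_def)
  have ipsq: "ip n (\<lambda>i. ind S i - s / real n) (\<lambda>i. ind S i - s / real n) = s - s^2 / real n"
    if S: "S \<subseteq> {..<n}" and s: "s = real (card S)" for S s
  proof -
    have indsq: "\<And>i. ind S i * ind S i = ind S i" by (simp add: ind_def)
    have "ip n (\<lambda>i. ind S i - s / real n) (\<lambda>i. ind S i - s / real n)
        = (\<Sum>i<n. ind S i - 2 * (s / real n) * ind S i + (s / real n)^2)"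
      unfolding ip_def by (intro sum.cong refl) (simp add: power2_eq_square algebra_simps indsq)
    also have "\<dots> = (\<Sum>i<n. ind S i) - 2 * (s / real n) * (\<Sum>i<n. ind S i) + real n * (s / real n)^2"
      by (simp add: sum.distrib sum_subtractf sum_distrib_left)
    also have "\<dots> = s - s^2 / real n" using sum_ind[OF S] s n by (simp add: power2_eq_square field_simps)
    finally show ?thesis .
  qed
  have ipx: "ip n x x = r - r^2 / real n" unfolding x_def by (rule ipsq[OF R r_def])
  have ipy: "ip n y y = t - t^2 / real n" unfolding y_def by (rule ipsq[OF T t_def])
  define cc where "cc i = real (card (nbhd E i \<inter> T))" for i
  have gy: "gop n E y i = cc i - t / real n * real d" if i: "i < n" for i
  proof -
    have "gop n E y i = (\<Sum>j<n. ind T j * Am E i j) - t / real n * (\<Sum>j<n. Am E i j)"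
      by (simp add: gop_def y_def algebra_simps sum_subtractf sum_distrib_left)
    also have "(\<Sum>j<n. ind T j * Am E i j) = cc i"
      using sum_ind_mult[OF T] sum_Am[OF sg finT] by (simp add: cc_def)
    finally show ?thesis using gop_one[OF sg reg i] by simp
  qed
  have sumcc: "(\<Sum>i<n. cc i) = t * real d"
  proof -
    have "(\<Sum>i<n. cc i) = (\<Sum>i<n. \<Sum>j\<in>T. Am E i j)" using sum_Am[OF sg finT] by (simp add: cc_def)
    also have "\<dots> = (\<Sum>j\<in>T. \<Sum>i<n. Am E j i)" by (subst sum.swap) (simp add: Am_sym[OF sg])
    also have "\<dots> = (\<Sum>j\<in>T. real d)" using gop_one[OF sg reg] T by (intro sum.cong) auto
    finally show ?thesis by (simp add: t_def)
  qed
  have "ip n x (gop n E y) = (\<Sum>i<n. (ind R i - r / real n) * (cc i - t / real n * real d))"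
    unfolding ip_def x_def using gy by (intro sum.cong) auto
  also have "\<dots> = (\<Sum>i<n. ind R i * cc i - (t / real n * real d) * ind R i
       - (r / real n) * cc i + (r / real n) * (t / real n * real d))"
    by (intro sum.cong refl) (simp add: algebra_simps)
  also have "\<dots> = (\<Sum>i<n. ind R i * cc i) - t / real n * real d * (\<Sum>i<n. ind R i)
       - r / real n * (\<Sum>i<n. cc i) + real n * (r / real n) * (t / real n * real d)"
    by (simp add: sum_subtractf sum.distrib sum_distrib_left)
  also have "\<dots> = (\<Sum>i\<in>R. cc i) - real d * r * t / real n"
    using sum_ind_mult[OF R] sum_ind[OF R] sumcc n by (simp add: r_def field_simps)
  finally have eq: "ip n x (gop n E y) = (\<Sum>i\<in>R. cc i) - real d * r * t / real n" .
  have "(ip n x (gop n E y))^2 \<le> ip n x x * ip n (gop n E y) (gop n E y)" by (rule ip_cs)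
  also have "\<dots> \<le> ip n x x * (lam^2 * ip n y y)"
    using op_bound[OF sg reg n es lam dl sumy] ip_nonneg[of n x] by (intro mult_left_mono) auto
  finally show ?thesis using eq ipx ipy by (simp add: cc_def r_def t_def mult_ac)
qed

lemma int_path_mono: "X \<subseteq> Y \<Longrightarrow> int_path P X \<subseteq> int_path P Y"
  unfolding int_path_def by blast

lemma int_path_sub: "int_path P X \<subseteq> X"
  unfolding int_path_def by blast

lemma int_path_subP: "int_path P X \<subseteq> set P"
  unfolding int_path_def by auto

locale setting =
  fixes n d :: nat and lam :: real and E :: "nat \<Rightarrow> nat \<Rightarrow> bool" and P A xs ys :: "nat list"
    and es :: "real list"
  assumes sg: "simple_graph n E" and reg: "regular n E d"
    and es: "eigenvalue_list (adj_matrix n E) es"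
    and lamb: "\<forall>i. 1 \<le> i \<and> i < length es \<longrightarrow> \<bar>es ! i\<bar> \<le> lam"
    and dpos: "0 < d" and path: "is_path n E P" and PA: "P = xs @ A @ ys" and Ane: "A \<noteq> []"
    and hyp: "10 * lam * real n \<le> real (length A) * real d"
begin

abbreviation "a \<equiv> length A"

lemma distP: "distinct P" using path by (simp add: is_path_def)
lemma distA: "distinct A" using distP PA by simp
lemma cardA: "card (set A) = a" using distA by (simp add: distinct_card)
lemma setA_n: "set A \<subseteq> {..<n}" using path PA by (auto simp: is_path_def)
lemma setA_P: "set A \<subseteq> set P" using PA by auto
lemma a_le_n: "a \<le> n" using card_mono[OF _ setA_n] cardA by simp
lemma npos: "0 < n" using a_le_n Ane by (cases A) auto

lemma nbhd_card: "v < n \<Longrightarrow> card (nbhd E v) = d" using reg by (simp add: regular_def)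
lemma nbhd_notv: "v \<notin> nbhd E v" using sg by (simp add: simple_graph_def nbhd_def)

lemma d_lt_n: "d < n"
proof -
  have "nbhd E 0 \<subseteq> {..<n} - {0}" using nbhd_sub[OF sg] nbhd_notv by blast
  then have "card (nbhd E 0) \<le> n - 1" using card_mono[of "{..<n} - {0}" "nbhd E 0"] npos by simp
  then show ?thesis using nbhd_card[OF npos] dpos by simp
qed

lemma lam_lt_d: "lam < real d"
proof -
  have "10 * lam * real n \<le> real n * real d" using hyp a_le_n dpos
    by (meson of_nat_0_le_iff of_nat_mono mult_right_mono order_trans)
  then have "10 * lam \<le> real d" using npos by (simp add: mult.commute)
  moreover have "lam < 10 * lam \<or> lam \<le> 0" by auto
  ultimately show ?thesis using dpos by auto
qed

lemma len_es: "length es = n" using es0_d(2)[OF sg reg npos es lamb lam_lt_d] .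

lemma lam_nonneg: "0 \<le> lam"
proof -
  have "2 \<le> n" using d_lt_n dpos by simp
  then show ?thesis using lamb len_es by (metis abs_ge_zero le_less_trans less_le_trans one_less_numeral_iff order_trans one_le_numeral semiring_norm(76) le_numeral_extra(4) less_eq_nat.simps(1) nat_le_linear numeral_2_eq_2 Suc_le_eq order.refl)
qed

lemma mix:
  assumes "R \<subseteq> {..<n}" "T \<subseteq> {..<n}"
  shows "((\<Sum>i\<in>R. real (card (nbhd E i \<inter> T))) - real d * real (card R) * real (card T) / real n)^2
     \<le> lam^2 * (real (card R) - real (card R)^2 / real n) * (real (card T) - real (card T)^2 / real n)"
  by (rule mixing[OF sg reg npos es lamb lam_lt_d assms])

lemma lam_bound: "lam \<le> real d * real a / (10 * real n)"
  using hyp npos by (simp add: field_simps mult.commute)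

lemma a_ge: "11 \<le> a"
proof -
  have z: "nbhd E 0 \<inter> {0} = {}" using nbhd_notv by auto
  have "((0::real) - real d / real n)^2 \<le> lam^2 * (1 - 1 / real n)^2"
    using mix[of "{0}" "{0}"] npos z by (simp add: power2_eq_square mult_ac)
  then have "(real d / real n)^2 \<le> (lam * (1 - 1 / real n))^2" by (simp add: power_mult_distrib)
  moreover have "0 \<le> lam * (1 - 1 / real n)" using lam_nonneg npos by simp
  ultimately have "real d / real n \<le> lam * (1 - 1 / real n)" using power2_le_imp_le by blast
  then have "real d \<le> lam * (real n - 1)" using npos by (simp add: field_simps)
  also have "\<dots> \<le> real d * real a / (10 * real n) * (real n - 1)"
    using lam_bound npos by (intro mult_right_mono) auto
  also have "real d * real a / (10 * real n) * (real n - 1) = (real d * (real a * (real n - 1))) / (10 * real n)"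
    by simp
  finally have "real d * (10 * real n) \<le> real d * (real a * (real n - 1))"
    using npos by (simp add: pos_le_divide_eq)
  then have h10: "10 * real n \<le> real a * (real n - 1)" using dpos by simp
  have a0: "0 < real a" using Ane by simp
  have "real a * (real n - 1) < real a * real n" using a0 by (intro mult_strict_left_mono) auto
  then have "10 * real n < real a * real n" using h10 by linarith
  then have "10 < real a" using npos by simp
  then show ?thesis by simp
qed

lemma s_bound: "100 * (real n - real d) < real a ^ 2"
proof -
  define U where "U = {..<n} - nbhd E 0"
  have NU: "nbhd E 0 \<subseteq> {..<n}" by (rule nbhd_sub[OF sg])
  have "finite (nbhd E 0)" using NU finite_subset by blast
  then have cU: "card U = n - d" using card_Diff_subset[OF _ NU] nbhd_card[OF npos] by (simp add: U_def)
  have z: "nbhd E 0 \<inter> U = {}" by (auto simp: U_def)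
  have dn: "real (n - d) = real n - real d" using d_lt_n by simp
  let ?m = "real n - real d"
  have m0: "0 < ?m" using d_lt_n by simp
  have "(real d * ?m / real n)^2 \<le> lam^2 * (1 - 1 / real n) * (?m - ?m^2 / real n)"
    using mix[of "{0}" U] npos z cU dn by (simp add: U_def power2_eq_square)
  also have "?m - ?m^2 / real n = ?m * real d / real n" using npos by (simp add: field_simps power2_eq_square)
  also have "lam^2 * (1 - 1 / real n) * (?m * real d / real n) = (lam^2 * (real n - 1) * (?m * real d)) / real n^2"
    using npos by (simp add: field_simps power2_eq_square)
  also have "(real d * ?m / real n)^2 = (real d * ?m)^2 / real n^2" by (simp add: power_divide)
  finally have "(real d * ?m)^2 / real n^2 \<le> (lam^2 * (real n - 1) * (?m * real d)) / real n^2" .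
  then have "(real d * ?m)^2 \<le> lam^2 * (real n - 1) * (?m * real d)"
    using npos by (simp add: divide_le_cancel)
  then have "(real d * ?m) * (real d * ?m) \<le> (lam^2 * (real n - 1)) * (real d * ?m)"
    by (simp add: power2_eq_square mult_ac)
  then have k1: "real d * ?m \<le> lam^2 * (real n - 1)"
    using m0 dpos by (simp add: mult_le_cancel_right)
  have "lam^2 \<le> (real d * real a / (10 * real n))^2"
    using lam_bound lam_nonneg by (intro power_mono) auto
  then have "lam^2 * (real n - 1) \<le> (real d * real a / (10 * real n))^2 * (real n - 1)"
    using npos by (intro mult_right_mono) auto
  with k1 have "real d * ?m \<le> (real d * real a / (10 * real n))^2 * (real n - 1)" by linarith
  also have "(real d * real a / (10 * real n))^2 * (real n - 1) = real d * (real d * real a^2 * (real n - 1)) / (100 * real n^2)"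
    by (simp add: power_divide power_mult_distrib power2_eq_square)
  finally have f1: "real d * ?m * (100 * real n^2) \<le> real d * (real d * real a^2 * (real n - 1))"
    using npos by (simp add: pos_le_divide_eq)
  have f2: "?m * (100 * real n^2) \<le> real d * real a^2 * (real n - 1)"
  proof (rule mult_left_le_imp_le[of "real d"])
    show "real d * (?m * (100 * real n^2)) \<le> real d * (real d * real a^2 * (real n - 1))"
      using f1 by (simp only: mult.assoc)
    show "0 < real d" using dpos by simp
  qed
  have g1: "real d * (real n - 1) \<le> real d * real n" by (intro mult_left_mono) auto
  have g2: "real d * real n < real n * real n" using d_lt_n npos by (intro mult_strict_right_mono) auto
  have g3: "0 < real a^2" using Ane by simp
  have "real d * real a^2 * (real n - 1) = (real d * (real n - 1)) * real a^2" by (simp only: mult_ac)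
  also have "\<dots> < (real n * real n) * real a^2" using g1 g2 g3 by (intro mult_strict_right_mono) auto
  finally have f3: "real d * real a^2 * (real n - 1) < (real n * real n) * real a^2" .
  have e1: "?m * (100 * real n^2) = (100 * ?m) * (real n * real n)" by (simp add: power2_eq_square mult_ac)
  have e2: "(real n * real n) * real a^2 = real a^2 * (real n * real n)" by (simp add: mult_ac)
  have "(100 * ?m) * (real n * real n) < real a^2 * (real n * real n)"
    using f2 f3 e1 e2 by linarith
  moreover have "0 < real n * real n" using npos by simp
  ultimately show ?thesis by (simp only: mult_less_cancel_right)
qed

end

context setting begin

abbreviation "p \<equiv> length xs"

lemma PA_nth: "j < a \<Longrightarrow> P ! (p + j) = A ! j"
  using PA by (simp add: nth_append)

lemma PA_len: "p + a \<le> length P" using PA by simp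

lemma setA_img: "set A = nth P ` {p..<p+a}"
proof
  show "set A \<subseteq> nth P ` {p..<p+a}"
  proof
    fix v assume "v \<in> set A"
    then obtain j where j: "j < a" "A ! j = v" by (auto simp: in_set_conv_nth)
    then have "P ! (p + j) = v" using PA_nth by simp
    moreover have "p + j \<in> {p..<p+a}" using j by simp
    ultimately show "v \<in> nth P ` {p..<p+a}" by blast
  qed
next
  show "nth P ` {p..<p+a} \<subseteq> set A"
  proof
    fix v assume "v \<in> nth P ` {p..<p+a}"
    then obtain i where i: "i \<in> {p..<p+a}" "v = P ! i" by blast
    then have "P ! (p + (i - p)) = A ! (i - p)" using PA_nth[of "i - p"] by auto
    then have "v = A ! (i - p)" using i by simp
    then show "v \<in> set A" using i nth_mem[of "i - p" A] by auto
  qed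
qed

lemma int_count:
  assumes S: "S \<subseteq> set A"
  shows "a \<le> card (int_path P S) + 3 * card (set A - S) + 2"
proof -
  define R' where "R' = {i \<in> {p..<p+a}. P ! i \<notin> S}"
  have injP: "inj_on (nth P) {..<length P}" using distP by (simp add: inj_on_nth)
  have R'sub: "R' \<subseteq> {..<length P}" using PA_len by (auto simp: R'_def)
  have imgR: "nth P ` R' = set A - S"
    using setA_img by (auto simp: R'_def)
  have finR: "finite R'" by (simp add: R'_def)
  have cR: "card R' = card (set A - S)"
    using card_image[OF inj_on_subset[OF injP R'sub]] imgR by simp
  define B where "B = R' \<union> Suc ` R' \<union> (\<lambda>i. i - 1) ` R'"
  have finB: "finite B" using finR by (simp add: B_def)
  have cB: "card B \<le> 3 * card R'"
  proof -
    have "card B \<le> card (R' \<union> Suc ` R') + card ((\<lambda>i. i - 1) ` R')" unfolding B_def by (rule card_Un_le)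
    also have "\<dots> \<le> card R' + card (Suc ` R') + card ((\<lambda>i. i - 1) ` R')" using card_Un_le by simp
    also have "\<dots> \<le> card R' + card R' + card R'"
      using card_image_le[OF finR, of Suc] card_image_le[OF finR, of "\<lambda>i. i - 1"] by linarith
    finally show ?thesis by simp
  qed
  define G where "G = {p+1..<p+a-1} - B"
  have cG: "card {p+1..<p+a-1} - card B \<le> card G" unfolding G_def by (rule diff_card_le_card_Diff[OF finB])
  have GP: "G \<subseteq> {..<length P}" using PA_len by (auto simp: G_def)
  have inS: "P ! i \<in> S" if "p \<le> i" "i < p + a" "i \<notin> R'" for i
  proof -
    have "P ! i \<in> set A" using setA_img that by auto
    then show ?thesis using that by (auto simp: R'_def)
  qed
  have Gint: "nth P ` G \<subseteq> int_path P S"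
  proof
    fix v assume "v \<in> nth P ` G"
    then obtain i where i: "i \<in> G" "v = P ! i" by blast
    have r1: "p + 1 \<le> i" "i < p + a - 1" "i \<notin> R'" "i \<notin> Suc ` R'" "i \<notin> (\<lambda>i. i - 1) ` R'"
      using i(1) by (auto simp: G_def B_def)
    have "i - 1 \<notin> R'"
    proof
      assume "i - 1 \<in> R'"
      then have "Suc (i - 1) \<in> Suc ` R'" by blast
      moreover have "Suc (i - 1) = i" using r1(1) by simp
      ultimately show False using r1(4) by simp
    qed
    have "i + 1 \<notin> R'"
    proof
      assume "i + 1 \<in> R'"
      then have "(i + 1) - 1 \<in> (\<lambda>i. i - 1) ` R'" by blast
      then show False using r1(5) by simp
    qed
    have "P ! i \<in> S" using inS r1 by simp
    moreover have "P ! (i - 1) \<in> S" using inS[of "i - 1"] r1 \<open>i - 1 \<notin> R'\<close> by simp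
    moreover have "P ! (i + 1) \<in> S" using inS[of "i + 1"] r1 \<open>i + 1 \<notin> R'\<close> by simp
    moreover have "0 < i" "i + 1 < length P" using r1 PA_len by auto
    ultimately show "v \<in> int_path P S" unfolding int_path_def using i(2) by blast
  qed
  have "card G \<le> card (int_path P S)"
  proof -
    have "card G = card (nth P ` G)" using card_image[OF inj_on_subset[OF injP GP]] by simp
    also have "\<dots> \<le> card (int_path P S)"
      using Gint by (intro card_mono) (auto intro: finite_subset[OF int_path_subP])
    finally show ?thesis .
  qed
  then show ?thesis using cG cB cR by simp
qed

end

lemma aux_sq:
  fixes x y :: real
  assumes "x \<le> y" "0 < y" "0 \<le> x"
  shows "0 \<le> x - x^2 / y" "x - x^2 / y \<le> x"
proof -
  have "x * x \<le> x * y" using assms by (intro mult_left_mono) auto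
  then have "x^2 / y \<le> x" using assms by (simp add: power2_eq_square pos_divide_le_eq)
  then show "0 \<le> x - x^2 / y" by simp
  show "x - x^2 / y \<le> x" using assms by simp
qed

context setting begin

definition goodS :: "nat set \<Rightarrow> bool" where
  "goodS S \<longleftrightarrow> (\<forall>v\<in>set A - S. real (card (nbhd E v \<inter> int_path P S)) < real d * real a / (4 * real n))"

lemma vertex_lb:
  assumes v: "v < n" and T: "T \<subseteq> {..<n}" and vT: "v \<notin> T"
  shows "real (card T) - (real n - 1 - real d) \<le> real (card (nbhd E v \<inter> T))"
proof -
  let ?N = "nbhd E v"
  have finT: "finite T" using T finite_subset by blast
  have Nsub: "?N \<subseteq> {..<n} - {v}" using nbhd_sub[OF sg] nbhd_notv by blast
  have finN: "finite ?N" using Nsub finite_subset by blast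
  have "T = (?N \<inter> T) \<union> (T - ?N)" by blast
  then have "card T = card (?N \<inter> T) + card (T - ?N)"
    using finT by (metis card_Un_disjoint Diff_disjoint finite_Diff finite_Int Int_commute Int_Diff_disjoint)
  moreover have "card (T - ?N) \<le> card (({..<n} - {v}) - ?N)"
    using T vT by (intro card_mono) auto
  moreover have "card (({..<n} - {v}) - ?N) = (n - 1) - d"
    using card_Diff_subset[OF finN Nsub] nbhd_card[OF v] v by simp
  ultimately have "card T \<le> card (?N \<inter> T) + ((n - 1) - d)" by simp
  then have "real (card T) \<le> real (card (?N \<inter> T)) + (real n - 1 - real d)"
    using d_lt_n by linarith
  then show ?thesis by simp
qed

lemma K:
  assumes S: "S \<subseteq> set A" and iv: "goodS S" and k: "card (set A - S) = k"
    and k1: "a < 10 * k" and k2: "10 * (k - 1) \<le> a"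
  shows False
proof -
  define R where "R = set A - S"
  define T where "T = int_path P S"
  define t where "t = card T"
  define e where "e = (\<Sum>v\<in>R. real (card (nbhd E v \<inter> T)))"
  have a11: "11 \<le> a" by (rule a_ge)
  have kpos: "0 < k" using k1 by simp
  have Rsub: "R \<subseteq> {..<n}" using setA_n by (auto simp: R_def)
  have TS: "T \<subseteq> S" by (simp add: T_def int_path_sub)
  have Tsub: "T \<subseteq> {..<n}" using TS S setA_n by blast
  have RT: "R \<inter> T = {}" using TS by (auto simp: R_def)
  have finR: "finite R" by (simp add: R_def)
  have cR: "card R = k" using k by (simp add: R_def)
  have Rne: "R \<noteq> {}" using cR kpos by auto
  have tle: "t \<le> a" using card_mono[OF _ order_trans[OF TS S]] cardA by (simp add: t_def)
  have tge: "a \<le> t + 3 * k + 2" using int_count[OF S] k by (simp add: t_def T_def)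
  have tn: "t \<le> n" using tle a_le_n by simp
  have kn: "k \<le> n" using card_mono[OF _ Rsub] cR by simp
  have eub: "e < real k * (real d * real a / (4 * real n))"
  proof -
    have "e < (\<Sum>v\<in>R. real d * real a / (4 * real n))"
      unfolding e_def using iv finR Rne by (intro sum_strict_mono) (auto simp: goodS_def R_def T_def)
    then show ?thesis using cR by simp
  qed
  show False
  proof (cases "39 \<le> a")
    case True
    define D where "D = real d / real n"
    have D0: "0 < D" using dpos npos by (simp add: D_def)
    define u where "u = real t - real a / 4"
    have ka: "real a < 10 * real k" using k1 by linarith
    have ka2: "10 * real k \<le> real a + 10" using k2 kpos by linarith
    have tge': "real a \<le> real t + 3 * real k + 2" using tge by linarith
    have a39: "39 \<le> real a" using True by simp
    have u32: "8 / 25 * real a \<le> u" using tge' ka2 a39 unfolding u_def by linarith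
    have u0: "0 \<le> u" using u32 by simp
    have mixR: "(e - real d * real k * real t / real n)^2
        \<le> lam^2 * (real k - real k^2 / real n) * (real t - real t^2 / real n)"
      using mix[OF Rsub Tsub] unfolding e_def cR t_def .
    have X1: "0 \<le> real k - real k^2 / real n" "real k - real k^2 / real n \<le> real k"
      using aux_sq[of "real k" "real n"] kn npos by auto
    have X2: "0 \<le> real t - real t^2 / real n" "real t - real t^2 / real n \<le> real t"
      using aux_sq[of "real t" "real n"] tn npos by auto
    have "(real k - real k^2 / real n) * (real t - real t^2 / real n) \<le> real k * real t"
      using X1 X2 by (intro mult_mono) auto
    also have "\<dots> \<le> real k * real a" using tle by (intro mult_left_mono) auto
    finally have "lam^2 * ((real k - real k^2 / real n) * (real t - real t^2 / real n)) \<le> lam^2 * (real k * real a)"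
      by (intro mult_left_mono) auto
    with mixR have m1: "(e - D * real k * real t)^2 \<le> lam^2 * (real k * real a)"
      by (simp add: D_def mult_ac)
    have eD: "e < D * real k * real a / 4" using eub by (simp add: D_def field_simps)
    have l1: "0 \<le> D * real k * u" using D0 u0 by simp
    have l2: "D * real k * u < D * real k * real t - e" using eD by (simp add: u_def algebra_simps)
    have "(D * real k * u)^2 < (D * real k * real t - e)^2"
      using l1 l2 by (intro power_strict_mono) auto
    also have "(D * real k * real t - e)^2 = (e - D * real k * real t)^2" by (simp add: power2_commute)
    also have "\<dots> \<le> lam^2 * (real k * real a)" by (rule m1)
    also have "\<dots> \<le> (D * real a / 10)^2 * (real k * real a)"
    proof -
      have "lam \<le> D * real a / 10" using lam_bound by (simp add: D_def field_simps)
      then have "lam^2 \<le> (D * real a / 10)^2" using lam_nonneg by (intro power_mono) auto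
      then show ?thesis by (intro mult_right_mono) auto
    qed
    finally have "(D^2 * real k) * (100 * real k * u^2) < (D^2 * real k) * (real a ^ 3)"
      by (simp add: power2_eq_square power3_eq_cube mult_ac)
    then have h1: "100 * real k * u^2 < real a ^ 3"
      using D0 kpos by (simp add: mult_less_cancel_left_pos)
    have "10 * real a * u^2 \<le> 100 * real k * u^2"
      using ka by (intro mult_right_mono) auto
    with h1 have "real a * (10 * u^2) < real a * (real a)^2"
      by (simp add: power2_eq_square power3_eq_cube mult_ac)
    moreover have "0 < real a" using Ane by simp
    ultimately have h2: "10 * u^2 < real a ^ 2" using mult_less_cancel_left_pos by blast
    have "(8 / 25 * real a)^2 \<le> u^2" using u32 by (intro power_mono) auto
    then have "64 / 625 * (real a)^2 \<le> u^2" by (simp add: power_mult_distrib power2_eq_square)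
    moreover have "0 \<le> u^2" by simp
    ultimately show False using h2 by linarith
  next
    case False
    have lb: "real k * (real t - (real n - 1 - real d)) \<le> e"
    proof -
      have "(\<Sum>v\<in>R. real t - (real n - 1 - real d)) \<le> e"
        unfolding e_def t_def
      proof (rule sum_mono)
        fix v assume v: "v \<in> R"
        then have "v \<notin> T" using RT by blast
        moreover have "v < n" using v Rsub by blast
        ultimately show "real (card T) - (real n - 1 - real d) \<le> real (card (nbhd E v \<inter> T))"
          using vertex_lb Tsub by blast
      qed
      then show ?thesis using cR by simp
    qed
    have "real d * real a / (4 * real n) \<le> real a / 4"
      using d_lt_n npos by (simp add: field_simps mult_right_mono)
    then have "e < real k * (real a / 4)" using eub kpos
      by (smt (verit) mult_left_mono of_nat_0_le_iff)
    with lb have "real k * (real t - (real n - 1 - real d)) < real k * (real a / 4)" by simp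
    then have h: "real t - (real n - 1 - real d) < real a / 4" using kpos by simp
    have sb: "100 * (real n - real d) < real a ^ 2" by (rule s_bound)
    have tge': "real a \<le> real t + 3 * real k + 2" using tge by linarith
    have sb': "100 * real n - 100 * real d < real a ^ 2" using sb by (simp add: right_diff_distrib)
    have q: "75 * real a < 300 * real k + 100 + real a ^ 2" using h sb' tge' by linarith
    have "a \<le> 38" using False by simp
    show False
    proof (cases "a \<le> 19")
      case True
      then have "k = 2" using k1 k2 a11 by linarith
      have "0 \<le> (real a - 11) * (64 - real a)" using a11 True by simp
      then show False using q \<open>k = 2\<close> by (simp add: algebra_simps power2_eq_square)
    next
      case F2: False
      show False
      proof (cases "a \<le> 29")
        case True
        then have "k = 3" using k1 k2 F2 by linarith
        have "0 \<le> (real a - 20) * (55 - real a)" using F2 True by simp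
        then show False using q \<open>k = 3\<close> by (simp add: algebra_simps power2_eq_square)
      next
        case False
        then have "k = 4" using k1 k2 \<open>a \<le> 38\<close> by linarith
        have "0 \<le> (real a - 30) * (45 - real a)" using False \<open>a \<le> 38\<close> by simp
        then show False using q \<open>k = 4\<close> by (simp add: algebra_simps power2_eq_square)
      qed
    qed
  qed
qed

end

context setting begin

lemma proc:
  "S \<subseteq> set A \<Longrightarrow> goodS S \<Longrightarrow> 10 * card (set A - S) \<le> a \<Longrightarrow>
   \<exists>A'. A' \<subseteq> set A \<and> clean n d E P A' \<and> real (card A') \<ge> 0.9 * real a"
proof (induction "card S" arbitrary: S rule: less_induct)
  case less
  have finA: "finite (set A)" by simp
  have cS: "card S + card (set A - S) = a"
    using card_Diff_subset[OF finite_subset[OF less.prems(1) finA] less.prems(1)] cardA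
      card_mono[OF finA less.prems(1)] by simp
  show ?case
  proof (cases "clean n d E P S")
    case True
    have "0.9 * real a \<le> real (card S)" using cS less.prems(3) by linarith
    then show ?thesis using True less.prems(1) by blast
  next
    case False
    have SP: "S \<subseteq> set P" using less.prems(1) setA_P by blast
    from False SP obtain v where v: "v \<in> S"
      and vb: "real (card (nbhd E v \<inter> int_path P S)) < real d * real (card S) / (4 * real n)"
      unfolding clean_def clean_delta_def by (auto simp: not_le)
    define S' where "S' = S - {v}"
    have S'sub: "S' \<subseteq> set A" using less.prems(1) by (auto simp: S'_def)
    have cS': "card S' < card S" unfolding S'_def
      using v finite_subset[OF less.prems(1) finA] by (rule card_Diff1_less[rotated])
    have intm: "int_path P S' \<subseteq> int_path P S" by (rule int_path_mono) (auto simp: S'_def)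
    have finI: "finite (int_path P S)" using finite_subset[OF int_path_subP] by blast
    have mono_c: "card (nbhd E u \<inter> int_path P S') \<le> card (nbhd E u \<inter> int_path P S)" for u
      using intm finI by (intro card_mono) auto
    have "real (card S) \<le> real a" using cS by simp
    then have "real d * real (card S) / (4 * real n) \<le> real d * real a / (4 * real n)"
      using npos by (intro divide_right_mono mult_left_mono) auto
    then have vb': "real (card (nbhd E v \<inter> int_path P S)) < real d * real a / (4 * real n)"
      using vb by linarith
    have good': "goodS S'"
      unfolding goodS_def
    proof
      fix u assume u: "u \<in> set A - S'"
      show "real (card (nbhd E u \<inter> int_path P S')) < real d * real a / (4 * real n)"
      proof (cases "u = v")
        case True then show ?thesis using mono_c[of v] vb' by (smt (verit) of_nat_mono)
      next
        case False
        then have "u \<in> set A - S" using u by (auto simp: S'_def)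
        then have "real (card (nbhd E u \<inter> int_path P S)) < real d * real a / (4 * real n)"
          using less.prems(2) by (simp add: goodS_def)
        then show ?thesis using mono_c[of u] by (smt (verit) of_nat_mono)
      qed
    qed
    have vA: "v \<in> set A" using v less.prems(1) by blast
    have "set A - S' = insert v (set A - S)" using vA v by (auto simp: S'_def)
    then have cD: "card (set A - S') = Suc (card (set A - S))" using v by simp
    show ?thesis
    proof (cases "10 * card (set A - S') \<le> a")
      case True
      then show ?thesis using less.hyps[OF cS' S'sub good' True] by blast
    next
      case False
      have "False"
        by (rule K[OF S'sub good' refl]) (use False cD less.prems(3) in auto)
      then show ?thesis ..
    qed
  qed
qed

lemma final: "\<exists>A'. A' \<subseteq> set A \<and> clean n d E P A' \<and> real (card A') \<ge> 0.9 * real a"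
  by (rule proc[of "set A"]) (auto simp: goodS_def)

end

theorem lemma4p5:
  fixes n d :: nat and lam :: real and E :: "nat \<Rightarrow> nat \<Rightarrow> bool" and P A :: "nat list"
  assumes "ndl_graph n d lam E"
    and "is_path n E P"
    and "subpath A P"
    and "real (length A) \<ge> 10 * lam * real n / real d"
  shows "\<exists>A'. A' \<subseteq> set A \<and> clean n d E P A' \<and> real (card A') \<ge> 0.9 * real (length A)"
proof -
  from assms(1) obtain es where sg: "simple_graph n E" and reg: "regular n E d"
    and es: "eigenvalue_list (adj_matrix n E) es"
    and lamb: "\<forall>i. 1 \<le> i \<and> i < length es \<longrightarrow> \<bar>es ! i\<bar> \<le> lam"
    unfolding ndl_graph_def by blast
  from assms(3) obtain xs ys where Ane: "A \<noteq> []" and PA: "P = xs @ A @ ys"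
    unfolding subpath_def by blast
  have distA: "distinct A" using assms(2) PA by (simp add: is_path_def)
  show ?thesis
  proof (cases "d = 0")
    case True
    have "clean n d E P (set A)"
      using True PA by (auto simp: clean_def clean_delta_def)
    moreover have "real (card (set A)) = real (length A)" using distA by (simp add: distinct_card)
    ultimately show ?thesis by (intro exI[of _ "set A"]) auto
  next
    case False
    then have dpos: "0 < d" by simp
    have hyp: "10 * lam * real n \<le> real (length A) * real d"
      using assms(4) dpos by (simp add: pos_divide_le_eq)
    interpret setting n d lam E P A xs ys es
      by unfold_locales (use sg reg es lamb dpos assms(2) PA Ane hyp in auto)
    show ?thesis by (rule final)
  qed
qed

end
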